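(* Let $G$ be an undirected graph on $n$ vertices with double cover $H$, let $W$ be the lazy random walk matrix of $H$, and let $\sigma$ be the simplify operator. Then: (i) $\sigma\circ(c\cdot p)=c\cdot(\sigma\circ p)$ for all $p\in\mathbb{R}^{2n}_{\ge0}$ and $c\in\mathbb{R}_{\ge0}$; (ii) $\sigma\circ(a+b)\preceq\sigma\circ a+\sigma\circ b$ for all $a,b\in\mathbb{R}^{2n}_{\ge0}$; (iii) $\sigma\circ(pW)\preceq(\sigma\circ p)W$ for all $p\in\mathbb{R}^{2n}_{\ge0}$.
   Context: The double cover $H$ has vertices $v_1,v_2$ for each $v\in V_G$ and edges $\{u_1,v_2\},\{u_2,v_1\}$ for each $\{u,v\}\in E_G$. Vectors are row vectors indexed by $V_H$. $W=\frac12(I+D_H^{-1}A_H)$ with $D_H$ the degree matrix and $A_H$ the adjacency matrix of $H$. The simplify operator $\sigma:\mathbb{R}^{2n}_{\ge0}\to\mathbb{R}^{2n}_{\ge0}$ is $(\sigma\circ p)(u_1)=\max(0,p(u_1)-p(u_2))$, $(\sigma\circ p)(u_2)=\max(0,p(u_2)-p(u_1))$ for every $u\in V_G$. $x\preceq y$ means $x(v)\le y(v)$ for every coordinate $v$. *)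

theory Defs
  imports "HOL-Analysis.Analysis"
begin

text \<open>Double cover H: vertex set 'v \<times> bool, where (v,False) is v_1 and (v,True) is v_2.
  Vectors indexed by V_H are elements of real ^ ('v \<times> bool); row vector times
  matrix is v*.\<close>

definition dc_adj :: "('v \<Rightarrow> 'v \<Rightarrow> bool) \<Rightarrow> 'v \<times> bool \<Rightarrow> 'v \<times> bool \<Rightarrow> bool" where
  "dc_adj E x y \<longleftrightarrow> E (fst x) (fst y) \<and> snd x \<noteq> snd y"

definition dc_deg :: "('v \<Rightarrow> 'v \<Rightarrow> bool) \<Rightarrow> 'v \<times> bool \<Rightarrow> nat" where
  "dc_deg E x = card {y. dc_adj E x y}"

definition adj_matrix_H :: "('v::finite \<Rightarrow> 'v \<Rightarrow> bool) \<Rightarrow> real ^ ('v \<times> bool) ^ ('v \<times> bool)" where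
  "adj_matrix_H E = (\<chi> x y. if dc_adj E x y then 1 else 0)"

definition deg_matrix_H :: "('v::finite \<Rightarrow> 'v \<Rightarrow> bool) \<Rightarrow> real ^ ('v \<times> bool) ^ ('v \<times> bool)" where
  "deg_matrix_H E = (\<chi> x y. if x = y then real (dc_deg E x) else 0)"

definition diag_inv :: "real ^ 'n ^ 'n \<Rightarrow> real ^ 'n ^ 'n" where
  "diag_inv D = (\<chi> x y. if x = y then inverse (D $ x $ x) else 0)"

definition lazy_walk_H :: "('v::finite \<Rightarrow> 'v \<Rightarrow> bool) \<Rightarrow> real ^ ('v \<times> bool) ^ ('v \<times> bool)" where
  "lazy_walk_H E = (1/2) *\<^sub>R (mat 1 + diag_inv (deg_matrix_H E) ** adj_matrix_H E)"

definition simplify :: "real ^ ('v::finite \<times> bool) \<Rightarrow> real ^ ('v \<times> bool)" where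
  "simplify p = (\<chi> x. max 0 (p $ x - p $ (fst x, \<not> snd x)))"

definition nonneg_vec :: "real ^ 'n \<Rightarrow> bool" where
  "nonneg_vec p \<longleftrightarrow> (\<forall>i. 0 \<le> p $ i)"

definition vec_le :: "real ^ 'n \<Rightarrow> real ^ 'n \<Rightarrow> bool" (infix "\<preceq>" 50) where
  "x \<preceq> y \<longleftrightarrow> (\<forall>i. x $ i \<le> y $ i)"

end

theory Submission
  imports Defs
begin

definition flp :: "'v \<times> bool \<Rightarrow> 'v \<times> bool" where
  "flp x = (fst x, \<not> snd x)"

lemma flp_flp[simp]: "flp (flp x) = x" by (simp add: flp_def)

lemma flp_eq[simp]: "flp x = flp y \<longleftrightarrow> x = y"
  by (metis flp_flp)

lemma bij_flp: "bij flp"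
  by (rule o_bij[of flp]) (auto simp: fun_eq_iff)

lemma adj_flp: "dc_adj E (flp x) (flp y) = dc_adj E x y"
  by (auto simp: dc_adj_def flp_def)

lemma deg_flp: "dc_deg E (flp x) = dc_deg E x"
proof -
  have "{y. dc_adj E (flp x) y} = flp ` {y. dc_adj E x y}"
    by (rule set_eqI) (metis adj_flp flp_flp image_iff mem_Collect_eq)
  moreover have "inj flp" using bij_flp bij_is_inj by blast
  then have "inj_on flp {y. dc_adj E x y}" by (rule inj_on_subset) simp
  ultimately show ?thesis unfolding dc_deg_def by (simp add: card_image)
qed

lemma W_entry:
  "lazy_walk_H E $ x $ y = (1/2) * ((if x = y then 1 else 0) + inverse (real (dc_deg E x)) * (if dc_adj E x y then 1 else 0))"
proof -
  have "(\<Sum>k\<in>UNIV. (if x = k then a else 0) * b k) = a * b x" for a :: real and b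
    by (simp add: if_distrib[of "\<lambda>t. t * _"] cong: if_cong)
  then show ?thesis
    by (simp add: lazy_walk_H_def matrix_matrix_mult_def diag_inv_def deg_matrix_H_def adj_matrix_H_def mat_def)
qed

lemma W_flp: "lazy_walk_H E $ flp x $ flp y = lazy_walk_H E $ x $ y"
  by (simp add: W_entry deg_flp adj_flp)

lemma W_nonneg: "0 \<le> lazy_walk_H E $ x $ y"
  by (simp add: W_entry)

lemma vm_flp: "(p v* lazy_walk_H E) $ flp y = (\<Sum>x\<in>UNIV. lazy_walk_H E $ x $ y * p $ flp x)"
proof -
  have "(p v* lazy_walk_H E) $ flp y = (\<Sum>x\<in>UNIV. lazy_walk_H E $ x $ flp y * p $ x)"
    by (simp add: vector_matrix_mult_def mult.commute)
  also have "\<dots> = (\<Sum>x\<in>UNIV. lazy_walk_H E $ flp x $ flp y * p $ flp x)"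
    using sum.reindex_bij_betw[OF bij_flp, of "\<lambda>x. lazy_walk_H E $ x $ flp y * p $ x"] by simp
  also have "\<dots> = (\<Sum>x\<in>UNIV. lazy_walk_H E $ x $ y * p $ flp x)"
    by (simp add: W_flp)
  finally show ?thesis .
qed

lemma simp_entry: "simplify p $ x = max 0 (p $ x - p $ flp x)"
  by (simp add: simplify_def flp_def)

theorem lemma3:
  fixes E :: "'v::finite \<Rightarrow> 'v \<Rightarrow> bool"
  assumes sym: "\<And>u v. E u v \<Longrightarrow> E v u"
    and irrefl: "\<And>u. \<not> E u u"
  shows "(\<forall>(p :: real ^ ('v \<times> bool)) c. nonneg_vec p \<and> 0 \<le> c \<longrightarrow> simplify (c *\<^sub>R p) = c *\<^sub>R simplify p)
       \<and> (\<forall>(a :: real ^ ('v \<times> bool)) b. nonneg_vec a \<and> nonneg_vec b \<longrightarrow> simplify (a + b) \<preceq> simplify a + simplify b)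
       \<and> (\<forall>p. nonneg_vec p \<longrightarrow> simplify (p v* lazy_walk_H E) \<preceq> simplify p v* lazy_walk_H E)"
proof (intro conjI allI impI)
  fix p :: "real ^ ('v \<times> bool)" and c :: real
  assume "nonneg_vec p \<and> 0 \<le> c"
  then have c: "0 \<le> c" by simp
  show "simplify (c *\<^sub>R p) = c *\<^sub>R simplify p"
  proof (rule vec_eq_iff[THEN iffD2], rule allI)
    fix i
    have "max 0 (c * p $ i - c * p $ flp i) = c * max 0 (p $ i - p $ flp i)"
    proof (cases "p $ i - p $ flp i \<le> 0")
      case True
      then have "c * (p $ i - p $ flp i) \<le> 0" using c by (simp add: mult_nonneg_nonpos)
      then show ?thesis using True by (simp add: right_diff_distrib)
    next
      case False
      then have "0 \<le> c * (p $ i - p $ flp i)" using c by simp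
      then show ?thesis using False by (simp add: right_diff_distrib)
    qed
    then show "simplify (c *\<^sub>R p) $ i = (c *\<^sub>R simplify p) $ i" by (simp add: simp_entry)
  qed
next
  fix a b :: "real ^ ('v \<times> bool)"
  show "simplify (a + b) \<preceq> simplify a + simplify b"
    unfolding vec_le_def
  proof
    fix i
    show "simplify (a + b) $ i \<le> (simplify a + simplify b) $ i"
      unfolding simp_entry vector_add_component by linarith
  qed
next
  fix p :: "real ^ ('v \<times> bool)"
  let ?W = "lazy_walk_H E"
  define s where "s = simplify p"
  show "simplify (p v* ?W) \<preceq> simplify p v* ?W"
    unfolding vec_le_def
  proof
    fix y
    have d: "p $ x - p $ flp x = s $ x - s $ flp x" for x
      by (simp add: s_def simp_entry) 
    have "(p v* ?W) $ y - (p v* ?W) $ flp y = (\<Sum>x\<in>UNIV. ?W $ x $ y * (p $ x - p $ flp x))"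
      by (simp only: vm_flp) (simp add: vector_matrix_mult_def mult.commute sum_subtractf right_diff_distrib)
    also have "\<dots> = (\<Sum>x\<in>UNIV. ?W $ x $ y * (s $ x - s $ flp x))" by (simp add: d)
    also have "\<dots> = (s v* ?W) $ y - (s v* ?W) $ flp y"
      by (simp only: vm_flp) (simp add: vector_matrix_mult_def mult.commute sum_subtractf right_diff_distrib)
    finally have e: "(p v* ?W) $ y - (p v* ?W) $ flp y = (s v* ?W) $ y - (s v* ?W) $ flp y" .
    have nn: "0 \<le> (s v* ?W) $ z" for z
      unfolding vector_matrix_mult_def
      by (simp add: sum_nonneg W_nonneg s_def simp_entry)
    show "simplify (p v* ?W) $ y \<le> (simplify p v* ?W) $ y"
      unfolding s_def[symmetric] using e nn[of y] nn[of "flp y"] by (simp add: simp_entry)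
  qed
qed

end
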